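(* For every $d\geq1$ and $0<\alpha<d$ there exists a constant $\beta_1=\beta_1(d,\alpha)<\infty$ such that the following holds: if $J:\mathbb Z^d\times\mathbb Z^d\to[0,\infty)$ is a symmetric, integrable, translation-invariant kernel and $c>0$ is such that $J(x,y)\geq c\|x-y\|_\infty^{-d-\alpha}$ for all distinct $x,y\in\mathbb Z^d$, then $c\beta_c\leq\beta_1$.
   Context: A kernel $J$ is symmetric if $J(x,y)=J(y,x)$, translation-invariant if $J(x,y)=J(0,y-x)$, and integrable if $\sum_{y\in\mathbb Z^d}J(x,y)<\infty$ for every $x$. For $\beta\geq 0$, long-range percolation on $\mathbb Z^d$ with kernel $J$ and parameter $\beta$ is the random graph with vertex set $\mathbb Z^d$ in which each unordered pair $\{x,y\}$ of distinct points is an edge independently with probability $1-\exp(-\beta J(x,y))$; $\mathbf P_\beta$ denotes its law, and $\beta_c=\inf\{\beta\geq 0:\mathbf P_\beta(\text{an infinite cluster exists})>0\}$. *)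

theory Defs
  imports "HOL-Probability.Probability"
begin

text \<open>Vertices of Z^d are integer lists of length d.\<close>
definition lattice :: "nat \<Rightarrow> int list set" where
  "lattice d = {x. length x = d}"

definition vdiff :: "int list \<Rightarrow> int list \<Rightarrow> int list" where
  "vdiff y x = map2 (\<lambda>a b. a - b) y x"

definition linf_norm :: "int list \<Rightarrow> real" where
  "linf_norm z = real_of_int (Max (insert 0 (abs ` set z)))"

definition lrp_edges :: "nat \<Rightarrow> int list set set" where
  "lrp_edges d = {{x, y} | x y. x \<in> lattice d \<and> y \<in> lattice d \<and> x \<noteq> y}"

definition edge_weight :: "(int list \<Rightarrow> int list \<Rightarrow> real) \<Rightarrow> int list set \<Rightarrow> real" where
  "edge_weight J e = (THE w. \<exists>x y. e = {x, y} \<and> w = J x y)"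

definition lrp_measure :: "nat \<Rightarrow> (int list \<Rightarrow> int list \<Rightarrow> real) \<Rightarrow> real \<Rightarrow> (int list set \<Rightarrow> bool) measure" where
  "lrp_measure d J \<beta> = (\<Pi>\<^sub>M e\<in>lrp_edges d.
      measure_pmf (bernoulli_pmf (1 - exp (- \<beta> * edge_weight J e))))"

definition open_adj :: "nat \<Rightarrow> (int list set \<Rightarrow> bool) \<Rightarrow> int list \<Rightarrow> int list \<Rightarrow> bool" where
  "open_adj d \<omega> x y \<longleftrightarrow> x \<in> lattice d \<and> y \<in> lattice d \<and> x \<noteq> y \<and> \<omega> {x, y}"

definition cluster :: "nat \<Rightarrow> (int list set \<Rightarrow> bool) \<Rightarrow> int list \<Rightarrow> int list set" where
  "cluster d \<omega> x = {y. (open_adj d \<omega>)\<^sup>*\<^sup>* x y}"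

definition infinite_cluster_event :: "nat \<Rightarrow> (int list \<Rightarrow> int list \<Rightarrow> real) \<Rightarrow> real \<Rightarrow> (int list set \<Rightarrow> bool) set" where
  "infinite_cluster_event d J \<beta> =
     {\<omega> \<in> space (lrp_measure d J \<beta>). \<exists>x\<in>lattice d. infinite (cluster d \<omega> x)}"

text \<open>Critical parameter, valued in the extended reals (Inf {} = \<infinity>).\<close>
definition beta_c :: "nat \<Rightarrow> (int list \<Rightarrow> int list \<Rightarrow> real) \<Rightarrow> ereal" where
  "beta_c d J = Inf {ereal \<beta> | \<beta>. \<beta> \<ge> 0 \<and>
      measure (lrp_measure d J \<beta>) (infinite_cluster_event d J \<beta>) > 0}"

definition admissible_kernel :: "nat \<Rightarrow> (int list \<Rightarrow> int list \<Rightarrow> real) \<Rightarrow> bool" where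
  "admissible_kernel d J \<longleftrightarrow>
     (\<forall>x\<in>lattice d. \<forall>y\<in>lattice d. J x y \<ge> 0) \<and>
     (\<forall>x\<in>lattice d. \<forall>y\<in>lattice d. J x y = J y x) \<and>
     (\<forall>x\<in>lattice d. \<forall>y\<in>lattice d. J x y = J (replicate d 0) (vdiff y x)) \<and>
     (\<forall>x\<in>lattice d. (\<lambda>y. J x y) summable_on lattice d)"

end

theory Submission
  imports Defs
begin


locale edgeprod =
  fixes I :: "'e set" and p :: "'e \<Rightarrow> bool pmf"
begin

definition "PP = PiM I (\<lambda>e. measure_pmf (p e))"

definition dep :: "'e set \<Rightarrow> (('e\<Rightarrow>bool) \<Rightarrow> bool) \<Rightarrow> bool" where
  "dep F Q \<longleftrightarrow> (\<forall>\<omega> \<omega>'. (\<forall>e\<in>F. \<omega> e = \<omega>' e) \<longrightarrow> Q \<omega> = Q \<omega>')"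

definition Pr :: "(('e\<Rightarrow>bool) \<Rightarrow> bool) \<Rightarrow> real" where
  "Pr Q = measure PP {\<omega>\<in>space PP. Q \<omega>}"

lemma prob_PP: "prob_space PP"
  unfolding PP_def by (intro prob_space_PiM measure_pmf.prob_space_axioms)

lemma distr_Pi_pmf:
  assumes fin: "finite F"
  shows "distr (measure_pmf (Pi_pmf F False p)) (PiM F (\<lambda>e. measure_pmf (p e))) (\<lambda>x. restrict x F)
         = PiM F (\<lambda>e. measure_pmf (p e))"
proof (rule product_sigma_finite.PiM_eqI, goal_cases)
  case 1
  interpret product_prob_space "\<lambda>e. measure_pmf (p e)" by (intro product_prob_spaceI measure_pmf.prob_space_axioms)
  show ?case by unfold_locales
next
  case 2 show ?case by fact
next
  case 3 show ?case by simp
next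
  case (4 A)
  have "Pi\<^sub>E F A \<in> sets (Pi\<^sub>M F (\<lambda>e. measure_pmf (p e)))"
    using 4 by (intro sets_PiM_I_finite fin) auto
  hence "emeasure (distr (measure_pmf (Pi_pmf F False p)) (Pi\<^sub>M F (\<lambda>e. measure_pmf (p e))) (\<lambda>x. restrict x F)) (Pi\<^sub>E F A) =
         emeasure (measure_pmf (Pi_pmf F False p)) ((\<lambda>x. restrict x F) -` Pi\<^sub>E F A)"
    using 4 by (subst emeasure_distr) (auto simp: space_PiM)
  also have "\<dots> = emeasure (measure_pmf (Pi_pmf F False p)) (PiE_dflt F False A)"
    by (intro emeasure_eq_AE AE_pmfI) (auto simp: PiE_dflt_def set_Pi_pmf fin)
  also have "\<dots> = (\<Prod>i\<in>F. emeasure (measure_pmf (p i)) (A i))"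
    by (simp add: measure_pmf.emeasure_eq_measure measure_Pi_pmf_PiE_dflt fin prod_ennreal)
  finally show ?case .
qed

definition ext :: "'e set \<Rightarrow> ('e \<Rightarrow> bool) \<Rightarrow> 'e \<Rightarrow> bool" where
  "ext F f = (\<lambda>e. if e \<in> F then f e else False)"

lemma dep_ext: "dep F Q \<Longrightarrow> Q (ext F f) = Q f"
  unfolding dep_def by (erule allE[of _ "ext F f"], erule allE[of _ f]) (simp add: ext_def)

lemma L1:
  assumes fin: "finite F" and FI: "F \<subseteq> I" and d: "dep F Q"
  shows "{\<omega>\<in>space PP. Q \<omega>} \<in> sets PP"
    and "Pr Q = measure_pmf.prob (Pi_pmf F False p) {f. Q f}"
proof -
  let ?M = "\<lambda>e. measure_pmf (p e)"
  interpret product_prob_space ?M I by (intro product_prob_spaceI measure_pmf.prob_space_axioms)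
  define X where "X = {f \<in> PiE F (\<lambda>_. UNIV). Q f}"
  have eq: "{\<omega>\<in>space PP. Q \<omega>} = prod_emb I ?M F X"
  proof -
    have "Q (restrict \<omega> F) = Q \<omega>" for \<omega>
      using d[unfolded dep_def, rule_format, of "restrict \<omega> F" \<omega>] by simp
    thus ?thesis unfolding X_def prod_emb_def PP_def by (auto simp: space_PiM)
  qed
  have finX: "finite X" unfolding X_def
    by (rule finite_subset[OF _ finite_PiE[OF fin, of "\<lambda>_. UNIV"]]) auto
  have Xs: "X \<in> sets (PiM F ?M)"
  proof -
    have "X = (\<Union>f\<in>X. PiE F (\<lambda>e. {f e}))"
    proof -
      have "PiE F (\<lambda>e. {f e}) = {f}" if "f \<in> X" for f
        using that unfolding X_def by (intro PiE_singleton) (auto simp: PiE_def)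
      thus ?thesis by auto
    qed
    also have "\<dots> \<in> sets (PiM F ?M)"
      using finX by (intro sets.finite_UN sets_PiM_I_finite fin) auto
    finally show ?thesis .
  qed
  have "prod_emb I ?M F X \<in> sets (PiM I ?M)"
    using Xs FI fin by (intro measurable_prod_emb) auto
  then show "{\<omega>\<in>space PP. Q \<omega>} \<in> sets PP"
    using eq unfolding PP_def by simp
  have "emeasure PP {\<omega>\<in>space PP. Q \<omega>} = emeasure (PiM I ?M) (prod_emb I ?M F X)"
    using eq by (simp add: PP_def)
  also have "\<dots> = emeasure (PiM F ?M) X"
    using Xs FI fin by (intro emeasure_PiM_emb')
  also have "\<dots> = emeasure (distr (measure_pmf (Pi_pmf F False p)) (PiM F ?M) (\<lambda>x. restrict x F)) X"
    by (simp add: distr_Pi_pmf fin)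
  also have "\<dots> = emeasure (measure_pmf (Pi_pmf F False p)) ((\<lambda>x. restrict x F) -` X)"
  proof -
    have m: "(\<lambda>x. restrict x F) \<in> measurable (measure_pmf (Pi_pmf F False p)) (PiM F ?M)"
      unfolding measurable_pmf_measure1 by (auto simp: space_PiM)
    show ?thesis using emeasure_distr[OF m Xs] by simp
  qed
  also have "\<dots> = emeasure (measure_pmf (Pi_pmf F False p)) {f. Q f}"
  proof -
    have "Q (restrict f F) = Q f" for f
      using d[unfolded dep_def, rule_format, of "restrict f F" f] by simp
    hence "(\<lambda>x. restrict x F) -` X = {f. Q f}" unfolding X_def by auto
    thus ?thesis by simp
  qed
  finally have E: "emeasure PP {\<omega>\<in>space PP. Q \<omega>} = emeasure (measure_pmf (Pi_pmf F False p)) {f. Q f}" .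
  show "Pr Q = measure_pmf.prob (Pi_pmf F False p) {f. Q f}"
    by (simp only: Pr_def measure_def E)
qed

lemma depD: "dep F Q \<Longrightarrow> (\<And>e. e \<in> F \<Longrightarrow> \<omega> e = \<omega>' e) \<Longrightarrow> Q \<omega> = Q \<omega>'"
  unfolding dep_def by blast

lemma depI: "(\<And>\<omega> \<omega>'. (\<And>e. e \<in> F \<Longrightarrow> \<omega> e = \<omega>' e) \<Longrightarrow> Q \<omega> = Q \<omega>') \<Longrightarrow> dep F Q"
  unfolding dep_def by blast

lemma dep_mono: "dep F Q \<Longrightarrow> F \<subseteq> G \<Longrightarrow> dep G Q"
  unfolding dep_def by blast

definition merge :: "'e set \<Rightarrow> ('e \<Rightarrow> bool) \<Rightarrow> ('e \<Rightarrow> bool) \<Rightarrow> 'e \<Rightarrow> bool" where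
  "merge F f g = (\<lambda>x. if x \<in> F then f x else g x)"

lemma emeasure_pair_pmf_sect:
  "emeasure (measure_pmf (pair_pmf X Y)) S = (\<integral>\<^sup>+ f. emeasure (measure_pmf Y) (Pair f -` S) \<partial>measure_pmf X)"
proof -
  have "emeasure (measure_pmf Y) (Pair f -` S) = (\<integral>\<^sup>+ y. indicator S (f,y) \<partial>measure_pmf Y)" for f
  proof -
    have "(\<integral>\<^sup>+ y. indicator S (f,y) \<partial>measure_pmf Y) = (\<integral>\<^sup>+ y. indicator (Pair f -` S) y \<partial>measure_pmf Y)"
      by (intro nn_integral_cong) (simp split: split_indicator)
    also have "\<dots> = emeasure (measure_pmf Y) (Pair f -` S)"
      by (rule nn_integral_indicator) simp
    finally show ?thesis by simp
  qed
  thus ?thesis unfolding pair_pmf_def by simp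
qed

lemma L3:
  assumes f1: "finite F1" and f2: "finite F2" and dj: "F1 \<inter> F2 = {}" and s1: "F1 \<subseteq> I" and s2: "F2 \<subseteq> I"
    and dA: "dep F1 A" and dB: "dep (F1 \<union> F2) B"
    and bnd: "\<And>\<omega>. A \<omega> \<Longrightarrow> Pr (\<lambda>\<omega>'. B (merge F1 \<omega> \<omega>')) \<le> b"
  shows "Pr (\<lambda>\<omega>. A \<omega> \<and> B \<omega>) \<le> b * Pr A"
proof -
  let ?X = "Pi_pmf F1 False p" and ?Y = "Pi_pmf F2 False p"
  have b0: "b \<ge> 0" if "A \<omega>" for \<omega>
  proof -
    have "Pr (\<lambda>\<omega>'. B (merge F1 \<omega> \<omega>')) \<ge> 0" unfolding Pr_def by simp
    thus ?thesis using bnd[OF that] by linarith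
  qed
  have dAB: "dep (F1 \<union> F2) (\<lambda>\<omega>. A \<omega> \<and> B \<omega>)"
    using dep_mono[OF dA] dB unfolding dep_def by blast
  have PAB: "Pr (\<lambda>\<omega>. A \<omega> \<and> B \<omega>) = measure_pmf.prob (Pi_pmf (F1 \<union> F2) False p) {f. A f \<and> B f}"
    using L1(2)[OF _ _ dAB] f1 f2 s1 s2 by simp
  have PA: "Pr A = measure_pmf.prob ?X {f. A f}"
    using L1(2)[OF f1 s1 dA] .
  have PB: "Pr (\<lambda>\<omega>'. B (merge F1 f \<omega>')) = measure_pmf.prob ?Y {g. B (merge F1 f g)}" for f
  proof -
    have "dep F2 (\<lambda>\<omega>'. B (merge F1 f \<omega>'))"
    proof (rule depI)
      fix \<omega> \<omega>' :: "'e \<Rightarrow> bool" assume "\<And>e. e \<in> F2 \<Longrightarrow> \<omega> e = \<omega>' e"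
      thus "B (merge F1 f \<omega>) = B (merge F1 f \<omega>')"
        by (intro depD[OF dB]) (auto simp: merge_def)
    qed
    thus ?thesis using L1(2)[OF f2 s2] by blast
  qed
  have Z: "Pi_pmf (F1 \<union> F2) False p = map_pmf (\<lambda>(f,g). merge F1 f g) (pair_pmf ?X ?Y)"
    using Pi_pmf_union[OF f1 f2 dj, of False p] unfolding merge_def by simp
  have AM: "A (merge F1 f g) = A f" for f g
    by (rule depD[OF dA]) (simp add: merge_def)
  have "emeasure (measure_pmf (Pi_pmf (F1 \<union> F2) False p)) {f. A f \<and> B f}
     = emeasure (measure_pmf (pair_pmf ?X ?Y)) ((\<lambda>(f,g). merge F1 f g) -` {f. A f \<and> B f})"
    unfolding Z by (simp add: emeasure_map_pmf)
  also have "\<dots> = (\<integral>\<^sup>+ f. emeasure (measure_pmf ?Y) (Pair f -` ((\<lambda>(f,g). merge F1 f g) -` {f. A f \<and> B f})) \<partial>measure_pmf ?X)"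
    by (rule emeasure_pair_pmf_sect)
  also have "\<dots> \<le> (\<integral>\<^sup>+ f. ennreal b * indicator {f. A f} f \<partial>measure_pmf ?X)"
  proof (rule nn_integral_mono)
    fix f
    show "emeasure (measure_pmf ?Y) (Pair f -` ((\<lambda>(f,g). merge F1 f g) -` {f. A f \<and> B f})) \<le> ennreal b * indicator {f. A f} f"
    proof (cases "A f")
      case True
      have "Pair f -` ((\<lambda>(f,g). merge F1 f g) -` {f. A f \<and> B f}) = {g. B (merge F1 f g)}"
        using True AM by auto
      hence "emeasure (measure_pmf ?Y) (Pair f -` ((\<lambda>(f,g). merge F1 f g) -` {f. A f \<and> B f}))
          = ennreal (measure_pmf.prob ?Y {g. B (merge F1 f g)})"
        by (simp add: measure_pmf.emeasure_eq_measure)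
      also have "\<dots> \<le> ennreal b" using bnd[OF True] PB[of f] by (intro ennreal_leI) simp
      finally show ?thesis using True by simp
    next
      case False
      hence "Pair f -` ((\<lambda>(f,g). merge F1 f g) -` {f. A f \<and> B f}) = {}"
        using AM by auto
      thus ?thesis by (simp only:) simp
    qed
  qed
  also have "\<dots> = ennreal b * emeasure (measure_pmf ?X) {f. A f}"
    by (simp add: nn_integral_cmult_indicator)
  also have "\<dots> = ennreal (b * measure_pmf.prob ?X {f. A f})"
  proof (cases "\<exists>\<omega>. A \<omega>")
    case True then obtain \<omega> where "A \<omega>" by blast
    from b0[OF this] show ?thesis by (simp add: measure_pmf.emeasure_eq_measure ennreal_mult)
  next
    case False
    hence "{f. A f} = {}" by auto
    thus ?thesis by simp
  qed
  finally have EE: "ennreal (measure_pmf.prob (Pi_pmf (F1 \<union> F2) False p) {f. A f \<and> B f}) \<le> ennreal (b * measure_pmf.prob ?X {f. A f})"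
    by (simp add: measure_pmf.emeasure_eq_measure)
  have "measure_pmf.prob (Pi_pmf (F1 \<union> F2) False p) {f. A f \<and> B f} \<le> b * measure_pmf.prob ?X {f. A f}"
  proof -
    have "b * measure_pmf.prob ?X {f. A f} \<ge> 0"
    proof (cases "\<exists>\<omega>. A \<omega>")
      case True then obtain \<omega> where "A \<omega>" by blast
      from b0[OF this] show ?thesis by simp
    next
      case False
      hence "{f. A f} = {}" by auto
      thus ?thesis by simp
    qed
    thus ?thesis using EE ennreal_le_iff by blast
  qed
  thus ?thesis using PAB PA by simp
qed


lemma Pr_nonneg: "Pr Q \<ge> 0" unfolding Pr_def by simp

lemma Pr_le1: "Pr Q \<le> 1"
  unfolding Pr_def using prob_space.prob_le_1[OF prob_PP] by blast

lemma Pr_mono: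
  assumes "{\<omega>\<in>space PP. R \<omega>} \<in> sets PP" "\<And>\<omega>. \<omega> \<in> space PP \<Longrightarrow> Q \<omega> \<Longrightarrow> R \<omega>"
  shows "Pr Q \<le> Pr R"
  unfolding Pr_def
  using prob_space.finite_measure[OF prob_PP] assms
  by (intro finite_measure.finite_measure_mono) auto

lemma Pr_union:
  assumes "finite T" "\<And>i. i \<in> T \<Longrightarrow> {\<omega>\<in>space PP. Q i \<omega>} \<in> sets PP"
  shows "Pr (\<lambda>\<omega>. \<exists>i\<in>T. Q i \<omega>) \<le> (\<Sum>i\<in>T. Pr (Q i))"
proof -
  have "{\<omega>\<in>space PP. \<exists>i\<in>T. Q i \<omega>} = (\<Union>i\<in>T. {\<omega>\<in>space PP. Q i \<omega>})" by auto
  moreover have "measure PP (\<Union>i\<in>T. {\<omega>\<in>space PP. Q i \<omega>}) \<le> (\<Sum>i\<in>T. measure PP {\<omega>\<in>space PP. Q i \<omega>})"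
    using prob_space.finite_measure[OF prob_PP] assms
    by (intro finite_measure.finite_measure_subadditive_finite) auto
  ultimately show ?thesis unfolding Pr_def by simp
qed

lemma Pr_or:
  assumes "{\<omega>\<in>space PP. Q \<omega>} \<in> sets PP" "{\<omega>\<in>space PP. R \<omega>} \<in> sets PP"
  shows "Pr (\<lambda>\<omega>. Q \<omega> \<or> R \<omega>) \<le> Pr Q + Pr R"
proof -
  have "{\<omega>\<in>space PP. Q \<omega> \<or> R \<omega>} = {\<omega>\<in>space PP. Q \<omega>} \<union> {\<omega>\<in>space PP. R \<omega>}" by auto
  moreover have "measure PP ({\<omega>\<in>space PP. Q \<omega>} \<union> {\<omega>\<in>space PP. R \<omega>}) \<le> measure PP {\<omega>\<in>space PP. Q \<omega>} + measure PP {\<omega>\<in>space PP. R \<omega>}"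
    using assms by (rule measure_Un_le)
  ultimately show ?thesis unfolding Pr_def by simp
qed

lemma L5:
  assumes "finite E" "E \<subseteq> I"
  shows "Pr (\<lambda>\<omega>. \<forall>e\<in>E. \<not> \<omega> e) = (\<Prod>e\<in>E. pmf (p e) False)"
proof -
  have d: "dep E (\<lambda>\<omega>. \<forall>e\<in>E. \<not> \<omega> e)" by (rule depI) auto
  have "Pr (\<lambda>\<omega>. \<forall>e\<in>E. \<not> \<omega> e) = measure_pmf.prob (Pi_pmf E False p) {f. \<forall>e\<in>E. \<not> f e}"
    by (rule L1(2)[OF assms d])
  also have "{f. \<forall>e\<in>E. \<not> f e} = Pi E (\<lambda>_. {False})" by (auto simp: Pi_def)
  also have "measure_pmf.prob (Pi_pmf E False p) (Pi E (\<lambda>_. {False})) = (\<Prod>e\<in>E. measure_pmf.prob (p e) {False})"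
    by (rule measure_Pi_pmf_Pi) (rule assms(1))
  finally show ?thesis by (simp add: measure_pmf_single)
qed

end


lemma div_pow_Suc: "(a::int) div (int L ^ Suc k) = (a div int L ^ k) div int L"
proof -
  have "int L ^ Suc k = int L ^ k * int L" by simp
  moreover have "a div (int L ^ k * int L) = a div int L ^ k div int L"
    by (rule zdiv_zmult2_eq) simp
  ultimately show ?thesis by (simp add: mult.commute)
qed

lemma div_eq_diff: assumes "(m::int) > 0" "a div m = b div m" shows "\<bar>a - b\<bar> \<le> m - 1"
proof -
  have "a = m * (a div m) + a mod m" "b = m * (a div m) + b mod m" using assms(2) by (simp_all, metis div_mult_mod_eq mult.commute)
  moreover have "0 \<le> a mod m" "a mod m < m" "0 \<le> b mod m" "b mod m < m" using assms by simp_all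
  ultimately show ?thesis by linarith
qed

lemma div_pow_Suc': "(a::int) div (int L * int L ^ k) = (a div int L ^ k) div int L"
  using div_pow_Suc[of a L k] by simp

locale blocks =
  fixes d :: nat and L :: nat
  assumes L2: "L \<ge> 2"
begin

definition blk :: "nat \<Rightarrow> int list \<Rightarrow> int list set" where
  "blk k z = {x \<in> lattice d. map (\<lambda>a. a div (int L ^ k)) x = z}"

definition par :: "int list \<Rightarrow> int list" where
  "par w = map (\<lambda>a. a div int L) w"

definition subs :: "int list \<Rightarrow> int list set" where
  "subs z = {w \<in> lattice d. par w = z}"

definition Eb :: "nat \<Rightarrow> int list \<Rightarrow> int list set set" where
  "Eb k z = {{x,y} | x y. x \<in> blk k z \<and> y \<in> blk k z \<and> x \<noteq> y}"

lemma blk_lattice: "blk k z \<subseteq> lattice d"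
  unfolding blk_def by auto

lemma blk_0: "z \<in> lattice d \<Longrightarrow> blk 0 z = {z}"
  unfolding blk_def by auto

lemma blk_Suc: "blk (Suc k) z = (\<Union>w\<in>subs z. blk k w)"
proof (intro equalityI subsetI)
  fix x assume x: "x \<in> blk (Suc k) z"
  define w where "w = map (\<lambda>a. a div (int L ^ k)) x"
  have "par w = z" using x unfolding par_def w_def blk_def by (auto simp: div_pow_Suc')
  moreover have "w \<in> lattice d" using x unfolding w_def blk_def lattice_def by auto
  moreover have "x \<in> blk k w" using x unfolding w_def blk_def by auto
  ultimately show "x \<in> (\<Union>w\<in>subs z. blk k w)" unfolding subs_def by auto
next
  fix x assume "x \<in> (\<Union>w\<in>subs z. blk k w)"
  then obtain w where w: "w \<in> subs z" "x \<in> blk k w" by auto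
  thus "x \<in> blk (Suc k) z" unfolding subs_def blk_def par_def by (auto simp: div_pow_Suc')
qed

lemma sub_blk: "w \<in> subs z \<Longrightarrow> blk k w \<subseteq> blk (Suc k) z"
  using blk_Suc by auto

lemma blk_disj: "w \<noteq> w' \<Longrightarrow> blk k w \<inter> blk k w' = {}"
  unfolding blk_def by auto

lemma finite_blk: "finite (blk k z)"
proof -
  let ?m = "int L ^ k"
  have m: "?m > 0" using L2 by simp
  have "inj_on (map (\<lambda>a. a mod ?m)) (blk k z)"
  proof (rule inj_onI)
    fix x y assume x: "x \<in> blk k z" and y: "y \<in> blk k z" and e: "map (\<lambda>a. a mod ?m) x = map (\<lambda>a. a mod ?m) y"
    have e2: "map (\<lambda>a. a div ?m) x = map (\<lambda>a. a div ?m) y" using x y unfolding blk_def by auto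
    have "length x = length y" using e by (metis length_map)
    thus "x = y" using e e2
    proof (induction x y rule: list_induct2)
      case (Cons a as b bs)
      have "a = ?m * (a div ?m) + a mod ?m" "b = ?m * (b div ?m) + b mod ?m" by simp_all
      with Cons show ?case by auto
    qed simp
  qed
  moreover have "map (\<lambda>a. a mod ?m) ` blk k z \<subseteq> {xs. set xs \<subseteq> {0..<?m} \<and> length xs = d}"
    using m unfolding blk_def lattice_def by auto
  moreover have "finite {xs. set xs \<subseteq> {0..<?m} \<and> length xs = d}"
    by (rule finite_lists_length_eq) simp
  ultimately have "finite (map (\<lambda>a. a mod ?m) ` blk k z)" by (rule_tac finite_subset) auto
  thus ?thesis using \<open>inj_on _ _\<close> by (rule finite_imageD)
qed

lemma subs_lattice: "subs z \<subseteq> lattice d" unfolding subs_def by auto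

lemma blk_diam:
  assumes "x \<in> blk k z" "y \<in> blk k z"
  shows "linf_norm (vdiff x y) \<le> real L ^ k"
proof -
  let ?m = "int L ^ k"
  have m: "?m > 0" using L2 by simp
  have len: "length x = length y" using assms unfolding blk_def lattice_def by auto
  have dv: "map (\<lambda>a. a div ?m) x = map (\<lambda>a. a div ?m) y" using assms unfolding blk_def by auto
  have "\<forall>v\<in>set (vdiff x y). \<bar>v\<bar> \<le> ?m"
    using len dv
  proof (induction x y rule: list_induct2)
    case (Cons a as b bs)
    have "\<bar>a - b\<bar> \<le> ?m - 1" using div_eq_diff[OF m] Cons.prems by auto
    with Cons show ?case by (auto simp: vdiff_def)
  qed (simp add: vdiff_def)
  hence "Max (insert 0 (abs ` set (vdiff x y))) \<le> ?m"
    using m by (subst Max_le_iff) auto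
  hence "real_of_int (Max (insert 0 (abs ` set (vdiff x y)))) \<le> real_of_int ?m" by linarith
  thus ?thesis unfolding linf_norm_def by simp
qed

lemma linf_pos:
  assumes "length x = length y" "x \<noteq> y"
  shows "linf_norm (vdiff x y) \<ge> 1"
proof -
  have "\<exists>v\<in>set (vdiff x y). \<bar>v\<bar> \<ge> 1"
    using assms
  proof (induction x y rule: list_induct2)
    case (Cons a as b bs)
    show ?case
    proof (cases "a = b")
      case True
      with Cons have "\<exists>v\<in>set (vdiff as bs). \<bar>v\<bar> \<ge> 1" by auto
      thus ?thesis by (auto simp: vdiff_def)
    next
      case False
      hence "\<bar>a - b\<bar> \<ge> 1" by linarith
      thus ?thesis by (auto simp: vdiff_def)
    qed
  qed simp
  then obtain v where v: "v \<in> set (vdiff x y)" "\<bar>v\<bar> \<ge> 1" by blast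
  have "\<bar>v\<bar> \<le> Max (insert 0 (abs ` set (vdiff x y)))" using v by (intro Max_ge) auto
  thus ?thesis unfolding linf_norm_def using v by linarith
qed


lemma divset: "{a::int. a div int L = b} = {int L * b ..< int L * b + int L}"
proof -
  have Lp: "int L > 0" using L2 by simp
  show ?thesis
  proof (intro equalityI subsetI)
    fix a assume "a \<in> {a::int. a div int L = b}"
    hence e: "a div int L = b" by simp
    have "a = int L * (a div int L) + a mod int L" by simp
    moreover have "0 \<le> a mod int L" "a mod int L < int L" using Lp by simp_all
    ultimately show "a \<in> {int L * b ..< int L * b + int L}" using e by auto
  next
    fix a assume "a \<in> {int L * b ..< int L * b + int L}"
    hence "a = int L * b + (a - int L * b)" "0 \<le> a - int L * b" "a - int L * b < int L" by auto
    hence "a div int L = b" by (rule int_div_pos_eq)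
    thus "a \<in> {a::int. a div int L = b}" by simp
  qed
qed

lemma card_divset: "card {a::int. a div int L = b} = L"
  unfolding divset by simp

lemma card_maps: "card {w. map (\<lambda>a. a div int L) w = z} = L ^ length z"
proof (induction z)
  case Nil
  have "{w. map (\<lambda>a. a div int L) w = []} = {[]}" by auto
  thus ?case by simp
next
  case (Cons b z)
  have "{w. map (\<lambda>a. a div int L) w = b # z} = (\<lambda>(a,w). a # w) ` ({a. a div int L = b} \<times> {w. map (\<lambda>a. a div int L) w = z})"
    by (auto simp: Cons_eq_map_conv image_iff)
  moreover have "inj_on (\<lambda>(a,w). a # w) ({a. a div int L = b} \<times> {w. map (\<lambda>a. a div int L) w = z})"
    by (auto simp: inj_on_def)
  ultimately have "card {w. map (\<lambda>a. a div int L) w = b # z} = card ({a. a div int L = b} \<times> {w. map (\<lambda>a. a div int L) w = z})"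
    by (simp add: card_image)
  also have "\<dots> = L * L ^ length z" using Cons.IH card_divset by (simp add: card_cartesian_product)
  finally show ?case by simp
qed

lemma card_subs: assumes "z \<in> lattice d" shows "card (subs z) = L ^ d"
proof -
  have "subs z = {w. map (\<lambda>a. a div int L) w = z}"
    using assms unfolding subs_def par_def lattice_def by auto
  thus ?thesis using card_maps[of z] assms unfolding lattice_def by simp
qed

lemma finite_subs: assumes "z \<in> lattice d" shows "finite (subs z)"
proof -
  have "L ^ d > 0" using L2 by simp
  thus ?thesis using card_subs[OF assms] card.infinite by fastforce
qed

lemma zero_subs: "replicate d 0 \<in> subs (replicate d 0)"
  unfolding subs_def par_def lattice_def by simp

lemma zero_lattice: "replicate d 0 \<in> lattice d"
  unfolding lattice_def by simp

lemma Eb_lrp: "Eb k z \<subseteq> lrp_edges d"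
  unfolding Eb_def lrp_edges_def using blk_lattice by blast

lemma finite_Eb: "finite (Eb k z)"
proof -
  have "Eb k z \<subseteq> (\<lambda>(x,y). {x,y}) ` (blk k z \<times> blk k z)" unfolding Eb_def by auto
  moreover have "finite ((\<lambda>(x,y). {x,y}) ` (blk k z \<times> blk k z))"
    using finite_blk by simp
  ultimately show ?thesis by (rule finite_subset)
qed

lemma Eb_mono: "w \<in> subs z \<Longrightarrow> Eb k w \<subseteq> Eb (Suc k) z"
  unfolding Eb_def using sub_blk by blast

lemma Eb_disj: "w \<noteq> w' \<Longrightarrow> Eb k w \<inter> Eb k w' = {}"
proof -
  assume "w \<noteq> w'"
  hence "blk k w \<inter> blk k w' = {}" by (rule blk_disj)
  thus ?thesis unfolding Eb_def by (auto simp: doubleton_eq_iff)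
qed

fun gg :: "nat \<Rightarrow> int list \<Rightarrow> (int list set \<Rightarrow> bool) \<Rightarrow> bool \<times> int list set" where
  "gg 0 z \<omega> = (True, {z})"
| "gg (Suc k) z \<omega> =
     ((\<forall>w\<in>subs z. \<forall>w'\<in>subs z. w \<noteq> w' \<longrightarrow>
         (fst (gg k w \<omega>) \<or> fst (gg k w' \<omega>)) \<and>
         (fst (gg k w \<omega>) \<and> fst (gg k w' \<omega>) \<longrightarrow> (\<exists>s\<in>snd (gg k w \<omega>). \<exists>t\<in>snd (gg k w' \<omega>). \<omega> {s,t}))),
      (\<Union>w\<in>{w\<in>subs z. fst (gg k w \<omega>)}. snd (gg k w \<omega>)))"

abbreviation "good k z \<omega> \<equiv> fst (gg k z \<omega>)"
abbreviation "giant k z \<omega> \<equiv> snd (gg k z \<omega>)"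

lemma giant_blk: "z \<in> lattice d \<Longrightarrow> giant k z \<omega> \<subseteq> blk k z"
proof (induction k arbitrary: z)
  case 0 thus ?case by (simp add: blk_0)
next
  case (Suc k)
  show ?case
  proof
    fix x assume "x \<in> giant (Suc k) z \<omega>"
    then obtain w where w: "w \<in> subs z" "x \<in> giant k w \<omega>" by auto
    hence "x \<in> blk k w" using Suc.IH subs_lattice by blast
    thus "x \<in> blk (Suc k) z" using sub_blk w(1) by blast
  qed
qed

lemma finite_giant: "z \<in> lattice d \<Longrightarrow> finite (giant k z \<omega>)"
  using giant_blk finite_blk finite_subset by metis

lemma card_giant: "z \<in> lattice d \<Longrightarrow> good k z \<omega> \<Longrightarrow> card (giant k z \<omega>) \<ge> (L ^ d - 1) ^ k"
proof (induction k arbitrary: z)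
  case 0 thus ?case by simp
next
  case (Suc k)
  let ?G = "{w\<in>subs z. good k w \<omega>}"
  have fs: "finite (subs z)" using finite_subs[OF Suc.prems(1)] .
  have cG: "card ?G \<ge> L ^ d - 1"
  proof (cases "subs z \<subseteq> ?G")
    case True
    hence "?G = subs z" by auto
    thus ?thesis using card_subs[OF Suc.prems(1)] by simp
  next
    case False
    then obtain w0 where w0: "w0 \<in> subs z" "\<not> good k w0 \<omega>" by auto
    have "subs z - {w0} \<subseteq> ?G" using Suc.prems(2) w0 by auto
    hence "card (subs z - {w0}) \<le> card ?G" using fs by (intro card_mono) auto
    thus ?thesis using card_subs[OF Suc.prems(1)] w0(1) fs by (simp add: card_Diff_singleton)
  qed
  have fG: "finite ?G" using fs by simp
  have disj: "\<forall>w\<in>?G. \<forall>w'\<in>?G. w \<noteq> w' \<longrightarrow> giant k w \<omega> \<inter> giant k w' \<omega> = {}"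
  proof (intro ballI impI)
    fix w w' assume "w \<in> ?G" "w' \<in> ?G" "w \<noteq> w'"
    thus "giant k w \<omega> \<inter> giant k w' \<omega> = {}"
      using giant_blk[of w k \<omega>] giant_blk[of w' k \<omega>] blk_disj[of w w' k] subs_lattice by blast
  qed
  have "card (giant (Suc k) z \<omega>) = (\<Sum>w\<in>?G. card (giant k w \<omega>))"
  proof -
    have "\<forall>w\<in>?G. finite (giant k w \<omega>)" using finite_giant subs_lattice by blast
    from card_UN_disjoint[OF fG this disj] show ?thesis by simp
  qed
  also have "\<dots> \<ge> (\<Sum>w\<in>?G. (L ^ d - 1) ^ k)"
    using Suc.IH subs_lattice by (intro sum_mono) auto
  finally have "card (giant (Suc k) z \<omega>) \<ge> card ?G * (L ^ d - 1) ^ k" by simp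
  moreover have "card ?G * (L ^ d - 1) ^ k \<ge> (L ^ d - 1) * (L ^ d - 1) ^ k"
    using cG by (intro mult_right_mono) auto
  ultimately have "card (giant (Suc k) z \<omega>) \<ge> (L ^ d - 1) * (L ^ d - 1) ^ k" by linarith
  thus ?case by simp
qed

lemma giant_conn:
  "z \<in> lattice d \<Longrightarrow> good k z \<omega> \<Longrightarrow> u \<in> giant k z \<omega> \<Longrightarrow> v \<in> giant k z \<omega> \<Longrightarrow> (open_adj d \<omega>)\<^sup>*\<^sup>* u v"
proof (induction k arbitrary: z u v)
  case 0 thus ?case by simp
next
  case (Suc k)
  from Suc.prems(3) obtain w where w: "w \<in> subs z" "good k w \<omega>" "u \<in> giant k w \<omega>" by auto
  from Suc.prems(4) obtain w' where w': "w' \<in> subs z" "good k w' \<omega>" "v \<in> giant k w' \<omega>" by auto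
  have wl: "w \<in> lattice d" "w' \<in> lattice d" using w(1) w'(1) subs_lattice by auto
  show ?case
  proof (cases "w = w'")
    case True thus ?thesis using Suc.IH[OF wl(1) w(2) w(3)] w'(3) by simp
  next
    case False
    with Suc.prems(2) w w' obtain s t where st: "s \<in> giant k w \<omega>" "t \<in> giant k w' \<omega>" "\<omega> {s,t}"
      by fastforce
    have sb: "s \<in> blk k w" "t \<in> blk k w'" using st giant_blk wl by blast+
    hence "s \<noteq> t" using blk_disj[OF False] by blast
    moreover have "s \<in> lattice d" "t \<in> lattice d" using sb blk_lattice by blast+
    ultimately have "open_adj d \<omega> s t" using st(3) unfolding open_adj_def by simp
    hence "(open_adj d \<omega>)\<^sup>*\<^sup>* s t" by simp
    moreover have "(open_adj d \<omega>)\<^sup>*\<^sup>* u s" using Suc.IH[OF wl(1) w(2) w(3) st(1)] .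
    moreover have "(open_adj d \<omega>)\<^sup>*\<^sup>* t v" using Suc.IH[OF wl(2) w'(2) st(2) w'(3)] .
    ultimately show ?thesis by (meson rtranclp_trans)
  qed
qed

lemma gg_local:
  "z \<in> lattice d \<Longrightarrow> (\<And>e. e \<in> Eb k z \<Longrightarrow> \<omega> e = \<omega>' e) \<Longrightarrow> gg k z \<omega> = gg k z \<omega>'"
proof (induction k arbitrary: z)
  case 0 thus ?case by simp
next
  case (Suc k)
  have eq: "gg k w \<omega> = gg k w \<omega>'" if "w \<in> subs z" for w
    using Suc.IH[of w] that subs_lattice Eb_mono[OF that] Suc.prems(2) by blast
  have edge: "\<omega> {s,t} = \<omega>' {s,t}" if "w \<in> subs z" "w' \<in> subs z" "w \<noteq> w'" "s \<in> giant k w \<omega>" "t \<in> giant k w' \<omega>" for w w' s t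
  proof -
    have wl: "w \<in> lattice d" "w' \<in> lattice d" using that(1,2) subs_lattice by auto
    have sb: "s \<in> blk k w" "t \<in> blk k w'" using that(4,5) giant_blk wl by blast+
    hence "s \<noteq> t" using blk_disj[OF that(3)] by blast
    moreover have "s \<in> blk (Suc k) z" "t \<in> blk (Suc k) z" using sb sub_blk that(1,2) by blast+
    ultimately have "{s,t} \<in> Eb (Suc k) z" unfolding Eb_def by blast
    thus ?thesis using Suc.prems(2) by blast
  qed
  have A: "(\<forall>w\<in>subs z. \<forall>w'\<in>subs z. w \<noteq> w' \<longrightarrow>
         (good k w \<omega> \<or> good k w' \<omega>) \<and>
         (good k w \<omega> \<and> good k w' \<omega> \<longrightarrow> (\<exists>s\<in>giant k w \<omega>. \<exists>t\<in>giant k w' \<omega>. \<omega> {s,t}))) =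
        (\<forall>w\<in>subs z. \<forall>w'\<in>subs z. w \<noteq> w' \<longrightarrow>
         (good k w \<omega>' \<or> good k w' \<omega>') \<and>
         (good k w \<omega>' \<and> good k w' \<omega>' \<longrightarrow> (\<exists>s\<in>giant k w \<omega>'. \<exists>t\<in>giant k w' \<omega>'. \<omega>' {s,t})))"
  proof -
    have "(\<exists>s\<in>giant k w \<omega>. \<exists>t\<in>giant k w' \<omega>. \<omega> {s,t}) = (\<exists>s\<in>giant k w \<omega>'. \<exists>t\<in>giant k w' \<omega>'. \<omega>' {s,t})"
      if "w \<in> subs z" "w' \<in> subs z" "w \<noteq> w'" for w w'
      using edge[OF that] eq[OF that(1)] eq[OF that(2)] by auto
    thus ?thesis using eq by (auto 0 0)
  qed
  have B: "(\<Union>w\<in>{w\<in>subs z. good k w \<omega>}. giant k w \<omega>) = (\<Union>w\<in>{w\<in>subs z. good k w \<omega>'}. giant k w \<omega>')"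
    using eq by auto
  show ?case using A B by (simp only: gg.simps)
qed

end


locale lrp = blocks d L for d L +
  fixes J :: "int list \<Rightarrow> int list \<Rightarrow> real" and \<beta> c \<alpha> :: real
  assumes Jsym: "\<forall>x\<in>lattice d. \<forall>y\<in>lattice d. J x y = J y x"
  and Jlow: "\<forall>x\<in>lattice d. \<forall>y\<in>lattice d. x \<noteq> y \<longrightarrow> J x y \<ge> c * linf_norm (vdiff x y) powr (- real d - \<alpha>)"
  and bnn: "\<beta> \<ge> 0" and cpos: "c > 0" and apos: "\<alpha> > 0"
begin

definition pe :: "int list set \<Rightarrow> bool pmf" where
  "pe e = bernoulli_pmf (1 - exp (- \<beta> * edge_weight J e))"

sublocale E: edgeprod "lrp_edges d" pe .

lemma PP_eq: "E.PP = lrp_measure d J \<beta>"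
  unfolding E.PP_def lrp_measure_def pe_def by simp

lemma ew: assumes "s \<in> lattice d" "t \<in> lattice d" shows "edge_weight J {s,t} = J s t"
  unfolding edge_weight_def
proof (rule the_equality)
  show "\<exists>x y. {s, t} = {x, y} \<and> J s t = J x y" by blast
next
  fix w assume "\<exists>x y. {s, t} = {x, y} \<and> w = J x y"
  then obtain x y where "{s,t} = {x,y}" "w = J x y" by blast
  thus "w = J s t" using Jsym assms by (auto simp: doubleton_eq_iff)
qed

lemma J_lower:
  assumes "s \<in> blk m z" "t \<in> blk m z" "s \<noteq> t"
  shows "J s t \<ge> c * (real L ^ m) powr (- real d - \<alpha>)"
proof -
  have sl: "s \<in> lattice d" "t \<in> lattice d" using assms blk_lattice by blast+
  have n1: "linf_norm (vdiff s t) \<ge> 1"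
    using linf_pos[OF _ assms(3)] sl unfolding lattice_def by simp
  have n2: "linf_norm (vdiff s t) \<le> real L ^ m" by (rule blk_diam[OF assms(1,2)])
  have "(real L ^ m) powr (- real d - \<alpha>) \<le> linf_norm (vdiff s t) powr (- real d - \<alpha>)"
    using n1 n2 apos by (intro powr_mono2') auto
  hence "c * (real L ^ m) powr (- real d - \<alpha>) \<le> c * linf_norm (vdiff s t) powr (- real d - \<alpha>)"
    using cpos by simp
  also have "\<dots> \<le> J s t" using Jlow sl assms(3) by blast
  finally show ?thesis .
qed

lemma J_nonneg: assumes "s \<in> lattice d" "t \<in> lattice d" "s \<noteq> t" shows "J s t \<ge> 0"
proof -
  have "c * linf_norm (vdiff s t) powr (- real d - \<alpha>) \<ge> 0" using cpos by simp
  thus ?thesis using Jlow assms by fastforce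
qed

lemma pmf_False:
  assumes "s \<in> lattice d" "t \<in> lattice d" "s \<noteq> t"
  shows "pmf (pe {s,t}) False = exp (- \<beta> * J s t)"
proof -
  have "J s t \<ge> 0" using J_nonneg assms by blast
  hence "exp (- \<beta> * J s t) \<le> 1" using bnn by (simp add: mult_nonneg_nonneg)
  thus ?thesis unfolding pe_def ew[OF assms(1,2)] by simp
qed

lemma dep_good: "z \<in> lattice d \<Longrightarrow> E.dep (Eb k z) (\<lambda>\<omega>. P (gg k z \<omega>))"
  by (rule E.depI) (metis gg_local)

lemma meas_Eb: "E.dep (Eb k z) Q \<Longrightarrow> {\<omega>\<in>space E.PP. Q \<omega>} \<in> sets E.PP"
  by (rule E.L1(1)[OF finite_Eb Eb_lrp])

definition Xc :: "nat \<Rightarrow> int list \<Rightarrow> int list \<Rightarrow> int list set set" where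
  "Xc k w w' = {{s,t} | s t. s \<in> blk k w \<and> t \<in> blk k w'}"

lemma finite_Xc: "finite (Xc k w w')"
proof -
  have "Xc k w w' = (\<lambda>(s,t). {s,t}) ` (blk k w \<times> blk k w')" unfolding Xc_def by auto
  thus ?thesis using finite_blk by simp
qed

lemma Xc_sub: assumes "w \<in> subs z" "w' \<in> subs z" "w \<noteq> w'" shows "Xc k w w' \<subseteq> Eb (Suc k) z"
proof
  fix e assume "e \<in> Xc k w w'"
  then obtain s t where st: "e = {s,t}" "s \<in> blk k w" "t \<in> blk k w'" unfolding Xc_def by blast
  have "s \<noteq> t" using st blk_disj[OF assms(3)] by blast
  moreover have "s \<in> blk (Suc k) z" "t \<in> blk (Suc k) z" using st sub_blk assms by blast+
  ultimately show "e \<in> Eb (Suc k) z" unfolding Eb_def using st by blast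
qed

lemma Xc_disj: assumes "w \<noteq> w'" shows "(Eb k w \<union> Eb k w') \<inter> Xc k w w' = {}"
proof -
  have D: "blk k w \<inter> blk k w' = {}" using blk_disj[OF assms] .
  show ?thesis
  proof (rule ccontr)
    assume "\<not> ?thesis"
    then obtain e where e1: "e \<in> Eb k w \<union> Eb k w'" and e2: "e \<in> Xc k w w'" by blast
    from e2 obtain s t where st: "e = {s,t}" "s \<in> blk k w" "t \<in> blk k w'" unfolding Xc_def by blast
    from e1 obtain x y u where xy: "e = {x,y}" "x \<in> blk k u" "y \<in> blk k u" "u = w \<or> u = w'"
      unfolding Eb_def by blast
    have "s \<in> blk k u" "t \<in> blk k u" using st(1) xy(1-3) by (auto simp: doubleton_eq_iff)
    thus False using st D xy(4) by blast
  qed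
qed


lemma D1:
  assumes wl: "w \<in> lattice d" "w' \<in> lattice d" and ne: "w \<noteq> w'"
    and q: "E.Pr (\<lambda>\<omega>. \<not> good k w \<omega>) \<le> q" "E.Pr (\<lambda>\<omega>. \<not> good k w' \<omega>) \<le> q"
  shows "E.Pr (\<lambda>\<omega>. \<not> good k w \<omega> \<and> \<not> good k w' \<omega>) \<le> q * q"
proof -
  have dA: "E.dep (Eb k w) (\<lambda>\<omega>. \<not> good k w \<omega>)"
    using dep_good[OF wl(1), of k "\<lambda>x. \<not> fst x"] by simp
  have dB': "E.dep (Eb k w') (\<lambda>\<omega>. \<not> good k w' \<omega>)"
    using dep_good[OF wl(2), of k "\<lambda>x. \<not> fst x"] by simp
  have dB: "E.dep (Eb k w \<union> Eb k w') (\<lambda>\<omega>. \<not> good k w' \<omega>)" by (rule E.dep_mono[OF dB']) auto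
  have bnd: "E.Pr (\<lambda>\<omega>'. \<not> good k w' (E.merge (Eb k w) \<omega> \<omega>')) \<le> q" for \<omega>
  proof -
    have "(\<lambda>\<omega>'. \<not> good k w' (E.merge (Eb k w) \<omega> \<omega>')) = (\<lambda>\<omega>'. \<not> good k w' \<omega>')"
    proof
      fix \<omega>'
      have "gg k w' (E.merge (Eb k w) \<omega> \<omega>') = gg k w' \<omega>'"
        by (rule gg_local[OF wl(2)]) (use Eb_disj[OF ne, of k] in \<open>auto simp: E.merge_def\<close>)
      thus "(\<not> good k w' (E.merge (Eb k w) \<omega> \<omega>')) = (\<not> good k w' \<omega>')" by simp
    qed
    thus ?thesis using q(2) by simp
  qed
  have "E.Pr (\<lambda>\<omega>. \<not> good k w \<omega> \<and> \<not> good k w' \<omega>) \<le> q * E.Pr (\<lambda>\<omega>. \<not> good k w \<omega>)"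
    by (rule E.L3[OF finite_Eb finite_Eb Eb_disj[OF ne] Eb_lrp Eb_lrp dA dB bnd])
  also have "\<dots> \<le> q * q"
  proof -
    have "q \<ge> 0" using q(1) E.Pr_nonneg order_trans by blast
    thus ?thesis using q(1) by (intro mult_left_mono) auto
  qed
  finally show ?thesis .
qed

definition bk :: "nat \<Rightarrow> real" where
  "bk k = exp (- \<beta> * (c * (real L ^ Suc k) powr (- real d - \<alpha>) * (real ((L^d - 1)^k) * real ((L^d - 1)^k))))"

lemma D2:
  assumes z: "z \<in> lattice d" and w: "w \<in> subs z" "w' \<in> subs z" and ne: "w \<noteq> w'"
  shows "E.Pr (\<lambda>\<omega>. (good k w \<omega> \<and> good k w' \<omega>) \<and> \<not> (\<exists>s\<in>giant k w \<omega>. \<exists>t\<in>giant k w' \<omega>. \<omega> {s,t})) \<le> bk k"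
proof -
  have wl: "w \<in> lattice d" "w' \<in> lattice d" using w subs_lattice by blast+
  define F1 where "F1 = Eb k w \<union> Eb k w'"
  define F2 where "F2 = Xc k w w'"
  define \<Lambda> where "\<Lambda> = (real L ^ Suc k) powr (- real d - \<alpha>)"
  define g where "g = real ((L^d - 1)^k)"
  have BD: "blk k w \<inter> blk k w' = {}" using blk_disj[OF ne] .
  have gl1: "gg k w \<omega> = gg k w \<omega>' \<and> gg k w' \<omega> = gg k w' \<omega>'" if a: "\<And>e. e \<in> F1 \<Longrightarrow> \<omega> e = \<omega>' e" for \<omega> \<omega>'
  proof
    show "gg k w \<omega> = gg k w \<omega>'" by (rule gg_local[OF wl(1)]) (rule a, simp add: F1_def)
    show "gg k w' \<omega> = gg k w' \<omega>'" by (rule gg_local[OF wl(2)]) (rule a, simp add: F1_def)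
  qed
  have dA: "E.dep F1 (\<lambda>\<omega>. good k w \<omega> \<and> good k w' \<omega>)"
  proof (rule E.depI)
    fix \<omega> \<omega>' :: "int list set \<Rightarrow> bool" assume "\<And>e. e \<in> F1 \<Longrightarrow> \<omega> e = \<omega>' e"
    from gl1[OF this] show "(good k w \<omega> \<and> good k w' \<omega>) = (good k w \<omega>' \<and> good k w' \<omega>')" by simp
  qed
  have XF2: "{s,t} \<in> F2" if "s \<in> giant k w \<omega>" "t \<in> giant k w' \<omega>" for s t \<omega>
    using that giant_blk wl unfolding F2_def Xc_def by blast
  have dB: "E.dep (F1 \<union> F2) (\<lambda>\<omega>. \<not> (\<exists>s\<in>giant k w \<omega>. \<exists>t\<in>giant k w' \<omega>. \<omega> {s,t}))"
  proof (rule E.depI)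
    fix \<omega> \<omega>' :: "int list set \<Rightarrow> bool" assume a: "\<And>e. e \<in> F1 \<union> F2 \<Longrightarrow> \<omega> e = \<omega>' e"
    have "gg k w \<omega> = gg k w \<omega>' \<and> gg k w' \<omega> = gg k w' \<omega>'" by (rule gl1) (rule a, simp)
    hence g1: "giant k w \<omega> = giant k w \<omega>'" "giant k w' \<omega> = giant k w' \<omega>'" by auto
    have "\<omega> {s,t} = \<omega>' {s,t}" if "s \<in> giant k w \<omega>" "t \<in> giant k w' \<omega>" for s t
      using a XF2[OF that] by blast
    thus "(\<not> (\<exists>s\<in>giant k w \<omega>. \<exists>t\<in>giant k w' \<omega>. \<omega> {s,t})) = (\<not> (\<exists>s\<in>giant k w \<omega>'. \<exists>t\<in>giant k w' \<omega>'. \<omega>' {s,t}))"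
      using g1 by auto
  qed
  have disj12: "F1 \<inter> F2 = {}" unfolding F1_def F2_def by (rule Xc_disj[OF ne])
  have F2sub: "F2 \<subseteq> lrp_edges d" unfolding F2_def using Xc_sub[OF w ne] Eb_lrp by blast
  have F1sub: "F1 \<subseteq> lrp_edges d" unfolding F1_def using Eb_lrp by blast
  have bnd: "E.Pr (\<lambda>\<omega>'. \<not> (\<exists>s\<in>giant k w (E.merge F1 \<omega> \<omega>'). \<exists>t\<in>giant k w' (E.merge F1 \<omega> \<omega>'). (E.merge F1 \<omega> \<omega>') {s,t})) \<le> bk k"
    if A: "good k w \<omega> \<and> good k w' \<omega>" for \<omega>
  proof -
    define Gs where "Gs = giant k w \<omega>"
    define Gt where "Gt = giant k w' \<omega>"
    define C where "C = (\<lambda>(s,t). {s,t}) ` (Gs \<times> Gt)"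
    have GsB: "Gs \<subseteq> blk k w" "Gt \<subseteq> blk k w'" unfolding Gs_def Gt_def using giant_blk wl by auto
    have finG: "finite Gs" "finite Gt" unfolding Gs_def Gt_def using finite_giant wl by auto
    have "(\<lambda>\<omega>'. \<not> (\<exists>s\<in>giant k w (E.merge F1 \<omega> \<omega>'). \<exists>t\<in>giant k w' (E.merge F1 \<omega> \<omega>'). (E.merge F1 \<omega> \<omega>') {s,t}))
        = (\<lambda>\<omega>'. \<forall>e\<in>C. \<not> \<omega>' e)"
    proof
      fix \<omega>'
      have m1: "gg k w (E.merge F1 \<omega> \<omega>') = gg k w \<omega>" "gg k w' (E.merge F1 \<omega> \<omega>') = gg k w' \<omega>"
        using gl1[of "E.merge F1 \<omega> \<omega>'" \<omega>] by (simp_all add: E.merge_def)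
      have m2: "E.merge F1 \<omega> \<omega>' {s,t} = \<omega>' {s,t}" if "s \<in> Gs" "t \<in> Gt" for s t
        using XF2[of s \<omega> t] that disj12 unfolding Gs_def Gt_def E.merge_def by auto
      show "(\<not> (\<exists>s\<in>giant k w (E.merge F1 \<omega> \<omega>'). \<exists>t\<in>giant k w' (E.merge F1 \<omega> \<omega>'). (E.merge F1 \<omega> \<omega>') {s,t}))
          = (\<forall>e\<in>C. \<not> \<omega>' e)"
        unfolding m1 C_def using m2 unfolding Gs_def Gt_def by auto
    qed
    hence "E.Pr (\<lambda>\<omega>'. \<not> (\<exists>s\<in>giant k w (E.merge F1 \<omega> \<omega>'). \<exists>t\<in>giant k w' (E.merge F1 \<omega> \<omega>'). (E.merge F1 \<omega> \<omega>') {s,t}))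
        = E.Pr (\<lambda>\<omega>'. \<forall>e\<in>C. \<not> \<omega>' e)" by simp
    also have "\<dots> = (\<Prod>e\<in>C. pmf (pe e) False)"
    proof (rule E.L5)
      show "finite C" unfolding C_def using finG by simp
      have "C \<subseteq> F2" unfolding C_def F2_def Xc_def using GsB by fast
      thus "C \<subseteq> lrp_edges d" using F2sub by blast
    qed
    also have "\<dots> = (\<Prod>(s,t)\<in>Gs \<times> Gt. pmf (pe {s,t}) False)"
    proof -
      have "inj_on (\<lambda>(s,t). {s,t}) (Gs \<times> Gt)"
      proof (rule inj_onI, clarify)
        fix s t s' t' assume a: "s \<in> Gs" "t \<in> Gt" "s' \<in> Gs" "t' \<in> Gt" "{s,t} = {s',t'}"
        have "s \<noteq> t'" "s' \<noteq> t" using a GsB BD by blast+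
        thus "s = s' \<and> t = t'" using a(5) by (auto simp: doubleton_eq_iff)
      qed
      thus ?thesis unfolding C_def by (subst prod.reindex) (auto simp: case_prod_unfold)
    qed
    also have "\<dots> = (\<Prod>(s,t)\<in>Gs \<times> Gt. exp (- \<beta> * J s t))"
    proof (rule prod.cong[OF refl], clarify)
      fix s t assume "s \<in> Gs" "t \<in> Gt"
      hence "s \<in> lattice d" "t \<in> lattice d" "s \<noteq> t" using GsB BD blk_lattice by blast+
      thus "pmf (pe {s,t}) False = exp (- \<beta> * J s t)" by (rule pmf_False)
    qed
    also have "\<dots> = exp (\<Sum>(s,t)\<in>Gs \<times> Gt. - \<beta> * J s t)"
      using finG by (simp add: exp_sum case_prod_unfold)
    also have "\<dots> \<le> bk k"
    proof -
      have "(\<Sum>(s,t)\<in>Gs \<times> Gt. c * \<Lambda>) \<le> (\<Sum>(s,t)\<in>Gs \<times> Gt. J s t)"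
      proof (rule sum_mono, clarify)
        fix s t assume "s \<in> Gs" "t \<in> Gt"
        hence "s \<in> blk (Suc k) z" "t \<in> blk (Suc k) z" "s \<noteq> t" using GsB BD sub_blk w by blast+
        thus "c * \<Lambda> \<le> J s t" unfolding \<Lambda>_def by (rule J_lower)
      qed
      hence S1: "real (card Gs) * real (card Gt) * (c * \<Lambda>) \<le> (\<Sum>(s,t)\<in>Gs \<times> Gt. J s t)"
        by (simp add: card_cartesian_product)
      have cG: "real (card Gs) \<ge> g" "real (card Gt) \<ge> g"
        unfolding g_def Gs_def Gt_def using card_giant wl A by (simp_all add: of_nat_mono)
      have cl: "c * \<Lambda> \<ge> 0" unfolding \<Lambda>_def using cpos by simp
      have g0: "g \<ge> 0" unfolding g_def by simp
      have "g * g \<le> real (card Gs) * real (card Gt)" using cG g0 by (intro mult_mono) auto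
      hence "c * \<Lambda> * (g * g) \<le> real (card Gs) * real (card Gt) * (c * \<Lambda>)"
        using cl by (simp add: mult_left_mono mult.commute)
      hence S2: "c * \<Lambda> * (g * g) \<le> (\<Sum>(s,t)\<in>Gs \<times> Gt. J s t)" using S1 by linarith
      have "(\<Sum>(s,t)\<in>Gs \<times> Gt. - \<beta> * J s t) = - \<beta> * (\<Sum>(s,t)\<in>Gs \<times> Gt. J s t)"
        by (simp add: sum_distrib_left case_prod_unfold)
      also have "\<dots> \<le> - \<beta> * (c * \<Lambda> * (g * g))" using S2 bnn by (simp add: mult_left_mono)
      finally show ?thesis unfolding bk_def \<Lambda>_def g_def by simp
    qed
    finally show ?thesis .
  qed
  have "E.Pr (\<lambda>\<omega>. (good k w \<omega> \<and> good k w' \<omega>) \<and> \<not> (\<exists>s\<in>giant k w \<omega>. \<exists>t\<in>giant k w' \<omega>. \<omega> {s,t}))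
       \<le> bk k * E.Pr (\<lambda>\<omega>. good k w \<omega> \<and> good k w' \<omega>)"
    by (rule E.L3[OF _ _ disj12 F1sub F2sub dA dB bnd])
       (auto simp: F1_def F2_def finite_Eb finite_Xc)
  also have "\<dots> \<le> bk k"
  proof -
    have "bk k \<ge> 0" unfolding bk_def by simp
    thus ?thesis using E.Pr_le1 by (simp add: mult_left_le)
  qed
  finally show ?thesis .
qed


lemma step:
  assumes z: "z \<in> lattice d" and q: "\<forall>w\<in>lattice d. E.Pr (\<lambda>\<omega>. \<not> good k w \<omega>) \<le> q"
  shows "E.Pr (\<lambda>\<omega>. \<not> good (Suc k) z \<omega>) \<le> real (L^d) * real (L^d) * (q*q + bk k)"
proof -
  define T where "T = {p \<in> subs z \<times> subs z. fst p \<noteq> snd p}"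
  define Q1 where "Q1 = (\<lambda>p \<omega>. \<not> good k (fst p) \<omega> \<and> \<not> good k (snd p) \<omega>)"
  define Q2 where "Q2 = (\<lambda>p \<omega>. (good k (fst p) \<omega> \<and> good k (snd p) \<omega>) \<and> \<not> (\<exists>s\<in>giant k (fst p) \<omega>. \<exists>t\<in>giant k (snd p) \<omega>. \<omega> {s,t}))"
  have finT: "finite T" using finite_subs[OF z] unfolding T_def by simp
  have gsame: "gg k w \<omega> = gg k w \<omega>'" if "w \<in> subs z" "\<And>e. e \<in> Eb (Suc k) z \<Longrightarrow> \<omega> e = \<omega>' e" for w \<omega> \<omega>'
  proof (rule gg_local)
    show "w \<in> lattice d" using that(1) subs_lattice by blast
    show "\<omega> e = \<omega>' e" if "e \<in> Eb k w" for e using that \<open>w \<in> subs z\<close> Eb_mono \<open>\<And>e. e \<in> Eb (Suc k) z \<Longrightarrow> \<omega> e = \<omega>' e\<close> by blast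
  qed
  have dep1: "E.dep (Eb (Suc k) z) (Q1 p)" if "p \<in> T" for p
  proof (rule E.depI)
    fix \<omega> \<omega>' :: "int list set \<Rightarrow> bool" assume a: "\<And>e. e \<in> Eb (Suc k) z \<Longrightarrow> \<omega> e = \<omega>' e"
    have "gg k (fst p) \<omega> = gg k (fst p) \<omega>'" "gg k (snd p) \<omega> = gg k (snd p) \<omega>'"
      using gsame[OF _ a] that unfolding T_def by auto
    thus "Q1 p \<omega> = Q1 p \<omega>'" unfolding Q1_def by simp
  qed
  have dep2: "E.dep (Eb (Suc k) z) (Q2 p)" if "p \<in> T" for p
  proof (rule E.depI)
    fix \<omega> \<omega>' :: "int list set \<Rightarrow> bool" assume a: "\<And>e. e \<in> Eb (Suc k) z \<Longrightarrow> \<omega> e = \<omega>' e"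
    have pT: "fst p \<in> subs z" "snd p \<in> subs z" "fst p \<noteq> snd p" using that unfolding T_def by auto
    have g: "gg k (fst p) \<omega> = gg k (fst p) \<omega>'" "gg k (snd p) \<omega> = gg k (snd p) \<omega>'"
      using gsame[OF _ a] pT by auto
    have "\<omega> {s,t} = \<omega>' {s,t}" if "s \<in> giant k (fst p) \<omega>" "t \<in> giant k (snd p) \<omega>" for s t
    proof -
      have "s \<in> blk k (fst p)" "t \<in> blk k (snd p)" using that giant_blk pT subs_lattice by blast+
      hence "{s,t} \<in> Xc k (fst p) (snd p)" unfolding Xc_def by blast
      thus ?thesis using Xc_sub[OF pT] a by blast
    qed
    thus "Q2 p \<omega> = Q2 p \<omega>'" unfolding Q2_def using g by auto
  qed
  have m1: "{\<omega>\<in>space E.PP. Q1 p \<omega>} \<in> sets E.PP" if "p \<in> T" for p using meas_Eb[OF dep1[OF that]] .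
  have m2: "{\<omega>\<in>space E.PP. Q2 p \<omega>} \<in> sets E.PP" if "p \<in> T" for p using meas_Eb[OF dep2[OF that]] .
  have m12: "{\<omega>\<in>space E.PP. Q1 p \<omega> \<or> Q2 p \<omega>} \<in> sets E.PP" if "p \<in> T" for p
  proof (rule meas_Eb, rule E.depI)
    fix \<omega> \<omega>' :: "int list set \<Rightarrow> bool" assume a: "\<And>e. e \<in> Eb (Suc k) z \<Longrightarrow> \<omega> e = \<omega>' e"
    show "(Q1 p \<omega> \<or> Q2 p \<omega>) = (Q1 p \<omega>' \<or> Q2 p \<omega>')"
      using E.depD[OF dep1[OF that] a] E.depD[OF dep2[OF that] a] by simp
  qed
  have mU: "{\<omega>\<in>space E.PP. \<exists>p\<in>T. Q1 p \<omega> \<or> Q2 p \<omega>} \<in> sets E.PP"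
  proof (rule meas_Eb, rule E.depI)
    fix \<omega> \<omega>' :: "int list set \<Rightarrow> bool" assume a: "\<And>e. e \<in> Eb (Suc k) z \<Longrightarrow> \<omega> e = \<omega>' e"
    have "(Q1 p \<omega> \<or> Q2 p \<omega>) = (Q1 p \<omega>' \<or> Q2 p \<omega>')" if "p \<in> T" for p
      using E.depD[OF dep1[OF that] a] E.depD[OF dep2[OF that] a] by simp
    thus "(\<exists>p\<in>T. Q1 p \<omega> \<or> Q2 p \<omega>) = (\<exists>p\<in>T. Q1 p \<omega>' \<or> Q2 p \<omega>')" by blast
  qed
  have "E.Pr (\<lambda>\<omega>. \<not> good (Suc k) z \<omega>) \<le> E.Pr (\<lambda>\<omega>. \<exists>p\<in>T. Q1 p \<omega> \<or> Q2 p \<omega>)"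
  proof (rule E.Pr_mono[OF mU])
    fix \<omega> assume "\<not> good (Suc k) z \<omega>"
    then obtain w w' where ww: "w \<in> subs z" "w' \<in> subs z" "w \<noteq> w'"
      "\<not> ((good k w \<omega> \<or> good k w' \<omega>) \<and> (good k w \<omega> \<and> good k w' \<omega> \<longrightarrow> (\<exists>s\<in>giant k w \<omega>. \<exists>t\<in>giant k w' \<omega>. \<omega> {s,t})))"
      by auto
    hence "(w,w') \<in> T" unfolding T_def by simp
    moreover have "Q1 (w,w') \<omega> \<or> Q2 (w,w') \<omega>" using ww(4) unfolding Q1_def Q2_def by auto
    ultimately show "\<exists>p\<in>T. Q1 p \<omega> \<or> Q2 p \<omega>" by blast
  qed
  also have "\<dots> \<le> (\<Sum>p\<in>T. E.Pr (\<lambda>\<omega>. Q1 p \<omega> \<or> Q2 p \<omega>))"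
    using E.Pr_union[OF finT, of "\<lambda>p \<omega>. Q1 p \<omega> \<or> Q2 p \<omega>"] m12 by simp
  also have "\<dots> \<le> (\<Sum>p\<in>T. q*q + bk k)"
  proof (rule sum_mono)
    fix p assume pT: "p \<in> T"
    have pp: "fst p \<in> subs z" "snd p \<in> subs z" "fst p \<noteq> snd p" using pT unfolding T_def by auto
    have pl: "fst p \<in> lattice d" "snd p \<in> lattice d" using pp subs_lattice by blast+
    have "E.Pr (\<lambda>\<omega>. Q1 p \<omega> \<or> Q2 p \<omega>) \<le> E.Pr (Q1 p) + E.Pr (Q2 p)"
      by (rule E.Pr_or[OF m1[OF pT] m2[OF pT]])
    also have "E.Pr (Q1 p) \<le> q * q"
      unfolding Q1_def using D1[OF pl pp(3)] q pl by blast
    also have "E.Pr (Q2 p) \<le> bk k"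
      unfolding Q2_def using D2[OF z pp] by blast
    finally show "E.Pr (\<lambda>\<omega>. Q1 p \<omega> \<or> Q2 p \<omega>) \<le> q*q + bk k" by simp
  qed
  also have "\<dots> = real (card T) * (q*q + bk k)" by simp
  also have "\<dots> \<le> real (L^d) * real (L^d) * (q*q + bk k)"
  proof (rule mult_right_mono)
    have "card T \<le> card (subs z \<times> subs z)"
      using finite_subs[OF z] unfolding T_def by (intro card_mono) auto
    also have "\<dots> = L^d * L^d" using card_subs[OF z] by (simp add: card_cartesian_product)
    finally show "real (card T) \<le> real (L^d) * real (L^d)" by (metis of_nat_le_iff of_nat_mult)
    have "bk k \<ge> 0" unfolding bk_def by simp
    thus "0 \<le> q*q + bk k" by simp
  qed
  finally show ?thesis .
qed

end


definition nrm :: "int list \<Rightarrow> nat" where "nrm y = sum_list (map (\<lambda>a. nat \<bar>a\<bar>) y)"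

lemma nrm_ge: "a \<in> set y \<Longrightarrow> nat \<bar>a\<bar> \<le> nrm y"
  unfolding nrm_def by (induction y) auto

lemma finite_small: "finite {y \<in> lattice d. nrm y < m}"
proof -
  have "{y \<in> lattice d. nrm y < m} \<subseteq> {y. set y \<subseteq> {- int m..int m} \<and> length y = d}"
  proof (clarify, intro conjI)
    fix y assume y: "y \<in> lattice d" "nrm y < m"
    show "set y \<subseteq> {- int m..int m}"
    proof
      fix a assume "a \<in> set y"
      hence "nat \<bar>a\<bar> \<le> nrm y" by (rule nrm_ge)
      thus "a \<in> {- int m..int m}" using y(2) by auto
    qed
    show "length y = d" using y(1) unfolding lattice_def by simp
  qed
  moreover have "finite {y. set y \<subseteq> {- int m..int m} \<and> length y = d}"
    by (rule finite_lists_length_eq) simp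
  ultimately show ?thesis by (rule finite_subset)
qed

lemma cluster_lattice:
  assumes "x \<in> lattice d" shows "cluster d \<omega> x \<subseteq> lattice d"
proof
  fix y assume "y \<in> cluster d \<omega> x"
  hence "(open_adj d \<omega>)\<^sup>*\<^sup>* x y" unfolding cluster_def by simp
  thus "y \<in> lattice d"
  proof (cases rule: rtranclp.cases)
    case rtrancl_refl thus ?thesis using assms by simp
  next
    case (rtrancl_into_rtrancl b) thus ?thesis unfolding open_adj_def by simp
  qed
qed

lemma infinite_iff:
  assumes "x \<in> lattice d"
  shows "infinite (cluster d \<omega> x) \<longleftrightarrow> (\<forall>m. \<exists>y. (open_adj d \<omega>)\<^sup>*\<^sup>* x y \<and> m \<le> nrm y)"
proof
  assume inf: "infinite (cluster d \<omega> x)"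
  show "\<forall>m. \<exists>y. (open_adj d \<omega>)\<^sup>*\<^sup>* x y \<and> m \<le> nrm y"
  proof
    fix m
    have "\<not> cluster d \<omega> x \<subseteq> {y \<in> lattice d. nrm y < m}"
      using inf finite_small finite_subset by blast
    then obtain y where "y \<in> cluster d \<omega> x" "\<not> nrm y < m" using cluster_lattice[OF assms] by blast
    thus "\<exists>y. (open_adj d \<omega>)\<^sup>*\<^sup>* x y \<and> m \<le> nrm y" unfolding cluster_def by auto
  qed
next
  assume a: "\<forall>m. \<exists>y. (open_adj d \<omega>)\<^sup>*\<^sup>* x y \<and> m \<le> nrm y"
  show "infinite (cluster d \<omega> x)"
  proof
    assume fin: "finite (cluster d \<omega> x)"
    have "x \<in> cluster d \<omega> x" unfolding cluster_def by simp
    define m where "m = Suc (Max (nrm ` cluster d \<omega> x))"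
    obtain y where y: "(open_adj d \<omega>)\<^sup>*\<^sup>* x y" "m \<le> nrm y" using a by blast
    have "y \<in> cluster d \<omega> x" using y(1) unfolding cluster_def by simp
    hence "nrm y \<le> Max (nrm ` cluster d \<omega> x)" using fin by (intro Max_ge) auto
    thus False using y(2) unfolding m_def by simp
  qed
qed

context lrp
begin

lemma meas_edge: "e \<in> lrp_edges d \<Longrightarrow> {\<omega>\<in>space E.PP. \<omega> e} \<in> sets E.PP"
  by (rule E.L1(1)[of "{e}"]) (auto intro: E.depI)

lemma meas_adj:
  shows "{\<omega>\<in>space E.PP. open_adj d \<omega> z y} \<in> sets E.PP"
proof (cases "z \<in> lattice d \<and> y \<in> lattice d \<and> z \<noteq> y")
  case True
  hence "{z,y} \<in> lrp_edges d" unfolding lrp_edges_def by blast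
  moreover have "{\<omega>\<in>space E.PP. open_adj d \<omega> z y} = {\<omega>\<in>space E.PP. \<omega> {z,y}}"
    using True unfolding open_adj_def by auto
  ultimately show ?thesis using meas_edge by simp
next
  case False
  hence "{\<omega>\<in>space E.PP. open_adj d \<omega> z y} = {}" unfolding open_adj_def by auto
  thus ?thesis by (simp only: sets.empty_sets)
qed

lemma meas_pow:
  shows "{\<omega>\<in>space E.PP. (open_adj d \<omega> ^^ n) x y} \<in> sets E.PP"
proof (induction n arbitrary: y)
  case 0
  show ?case by (cases "x = y") auto
next
  case (Suc n)
  have "{\<omega>\<in>space E.PP. (open_adj d \<omega> ^^ Suc n) x y} =
        (\<Union>z. {\<omega>\<in>space E.PP. (open_adj d \<omega> ^^ n) x z} \<inter> {\<omega>\<in>space E.PP. open_adj d \<omega> z y})"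
    by auto
  also have "\<dots> \<in> sets E.PP"
    using Suc.IH meas_adj by (intro sets.countable_UN) auto
  finally show ?case .
qed

lemma meas_conn:
  shows "{\<omega>\<in>space E.PP. (open_adj d \<omega>)\<^sup>*\<^sup>* x y} \<in> sets E.PP"
proof -
  have "{\<omega>\<in>space E.PP. (open_adj d \<omega>)\<^sup>*\<^sup>* x y} = (\<Union>n::nat. {\<omega>\<in>space E.PP. (open_adj d \<omega> ^^ n) x y})"
    by (auto simp: rtranclp_power)
  also have "\<dots> \<in> sets E.PP" using meas_pow by (intro sets.countable_UN) auto
  finally show ?thesis .
qed

lemma meas_inf:
  shows "{\<omega>\<in>space E.PP. \<exists>x\<in>lattice d. infinite (cluster d \<omega> x)} \<in> sets E.PP"
proof -
  define S where "S = (\<lambda>x. \<Inter>m::nat. \<Union>y::int list. {\<omega>\<in>space E.PP. (open_adj d \<omega>)\<^sup>*\<^sup>* x y \<and> m \<le> nrm y})"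
  have "{\<omega>\<in>space E.PP. \<exists>x\<in>lattice d. infinite (cluster d \<omega> x)} = (\<Union>x\<in>lattice d. S x)"
    unfolding S_def using infinite_iff by fastforce
  also have "\<dots> \<in> sets E.PP"
  proof (intro sets.countable_UN subsetI, clarify)
    fix x assume "x \<in> lattice d"
    have "{\<omega>\<in>space E.PP. (open_adj d \<omega>)\<^sup>*\<^sup>* x y \<and> m \<le> nrm y} \<in> sets E.PP" for y m
    proof (cases "m \<le> nrm y")
      case True thus ?thesis using meas_conn by simp
    next
      case False thus ?thesis by simp
    qed
    thus "S x \<in> sets E.PP" unfolding S_def by (intro sets.countable_INT sets.countable_UN) auto
  qed
  finally show ?thesis .
qed

end


lemma powr_pow_swap: "x > 0 \<Longrightarrow> ((x::real) ^ n) powr a = (x powr a) ^ n"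
  by (induction n) (auto simp: powr_mult)

context blocks
begin

lemma zero_giant: "(\<forall>j. good j (replicate d 0) \<omega>) \<Longrightarrow> replicate d 0 \<in> giant k (replicate d 0) \<omega>"
proof (induction k)
  case 0 thus ?case by simp
next
  case (Suc k)
  thus ?case using zero_subs by auto
qed

lemma inf_from_good:
  assumes L3: "L \<ge> 3" and d1: "d \<ge> 1" and g: "\<forall>k. good k (replicate d 0) \<omega>"
  shows "infinite (cluster d \<omega> (replicate d 0))"
proof
  let ?z = "replicate d 0"
  assume fin: "finite (cluster d \<omega> ?z)"
  have sub: "giant k ?z \<omega> \<subseteq> cluster d \<omega> ?z" for k
  proof
    fix v assume "v \<in> giant k ?z \<omega>"
    thus "v \<in> cluster d \<omega> ?z"
      using giant_conn[OF zero_lattice _ zero_giant[OF g]] g unfolding cluster_def by auto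
  qed
  have "L ^ d \<ge> L ^ 1" using d1 L3 by (intro power_increasing) auto
  hence Ld: "L ^ d - 1 \<ge> 2" using L3 by simp
  define k where "k = card (cluster d \<omega> ?z)"
  have "2 ^ k \<le> (L ^ d - 1) ^ k" using Ld by (rule power_mono) simp
  also have "\<dots> \<le> card (giant k ?z \<omega>)" using card_giant[OF zero_lattice] g by blast
  also have "\<dots> \<le> k" unfolding k_def using sub fin by (intro card_mono) auto
  finally show False using less_exp[of k] by simp
qed

end

lemma div_nonneg_pos: "0 \<le> (x::real) / D \<Longrightarrow> D > 0 \<Longrightarrow> 0 \<le> x"
  by (simp add: zero_le_divide_iff)

context lrp
begin

lemma bk_bound:
  assumes d1: "d \<ge> 1" and L8: "real L powr (real d - \<alpha>) \<ge> 8"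
    and x1: "exp (- (\<beta> * c * real L powr (- real d - \<alpha>))) \<le> 1/2"
    and x2: "exp (- (\<beta> * c * real L powr (- real d - \<alpha>))) \<le> \<rho> / (4 * real (L^d) * real (L^d))"
  shows "bk k \<le> \<rho> / (real (L^d) * real (L^d) * 2 ^ (k+2))"
proof -
  define Lr where "Lr = real L"
  define a where "a = - real d - \<alpha>"
  define N where "N = real (L^d)"
  define t where "t = \<beta> * c * Lr powr a"
  have Lr: "Lr \<ge> 2" unfolding Lr_def using L2 by simp
  have N2: "N \<ge> 2"
  proof -
    have "L ^ d \<ge> L ^ 1" using d1 L2 by (intro power_increasing) auto
    hence "2 \<le> L ^ d" using L2 by simp
    hence "(2::real) \<le> real (L ^ d)" by (metis of_nat_le_iff of_nat_numeral)
    thus ?thesis unfolding N_def .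
  qed
  have NL: "N = Lr ^ d" unfolding N_def Lr_def by simp
  have t0: "t \<ge> 0" unfolding t_def using bnn cpos by simp
  have g: "real ((L^d - 1)^k) = (N - 1) ^ k"
  proof -
    have "L ^ d \<ge> 1" using L2 by simp
    thus ?thesis unfolding N_def by (simp add: of_nat_diff)
  qed
  have pa: "Lr powr a > 0" using Lr by simp
  have key: "Lr powr a * (N - 1)^2 \<ge> 2"
  proof -
    have "(N - 1)^2 \<ge> N^2 / 4"
    proof -
      have "N \<le> 2 * (N - 1)" using N2 by (simp add: algebra_simps)
      hence "N^2 \<le> (2 * (N - 1))^2" using N2 by (intro power_mono) auto
      moreover have "(2 * (N - 1))^2 = 4 * (N - 1)^2" by (simp add: power2_eq_square algebra_simps)
      ultimately show ?thesis by linarith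
    qed
    hence "Lr powr a * (N - 1)^2 \<ge> Lr powr a * (N^2 / 4)" using pa by (intro mult_left_mono) auto
    moreover have "Lr powr a * N^2 = Lr powr (real d - \<alpha>)"
    proof -
      have "N^2 = Lr powr (2 * real d)" unfolding NL using Lr
        by (simp add: powr_realpow[symmetric] powr_powr power2_eq_square powr_add[symmetric])
      hence "Lr powr a * N^2 = Lr powr (a + 2 * real d)" by (simp add: powr_add)
      thus ?thesis unfolding a_def by simp
    qed
    ultimately show ?thesis using L8 unfolding Lr_def by simp
  qed
  have X: "(Lr ^ Suc k) powr a * ((N - 1)^k * (N - 1)^k) \<ge> Lr powr a * 2 ^ k"
  proof -
    have e1: "(Lr ^ Suc k) powr a = (Lr powr a) ^ Suc k" using Lr by (intro powr_pow_swap) auto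
    have e2: "(N - 1)^k * (N - 1)^k = ((N - 1)^2)^k" by (simp only: power_mult_distrib[symmetric] power2_eq_square)
    have "(Lr ^ Suc k) powr a * ((N - 1)^k * (N - 1)^k) = Lr powr a * ((Lr powr a)^k * ((N - 1)^2)^k)"
      unfolding e1 e2 by (simp only: power_Suc mult.assoc)
    also have "\<dots> = Lr powr a * (Lr powr a * (N - 1)^2) ^ k" by (simp only: power_mult_distrib)
    finally have "(Lr ^ Suc k) powr a * ((N - 1)^k * (N - 1)^k) = Lr powr a * (Lr powr a * (N - 1)^2) ^ k" .
    also have "\<dots> \<ge> Lr powr a * 2 ^ k" using key pa by (intro mult_left_mono power_mono) auto
    finally show ?thesis .
  qed
  have "bk k = exp (- \<beta> * (c * (Lr ^ Suc k) powr a * ((N - 1)^k * (N - 1)^k)))"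
    unfolding bk_def g[symmetric] Lr_def a_def by simp
  also have "\<dots> \<le> exp (- (t * 2 ^ k))"
  proof -
    have "\<beta> * c * (Lr powr a * 2 ^ k) \<le> \<beta> * c * ((Lr ^ Suc k) powr a * ((N - 1)^k * (N - 1)^k))"
      using X bnn cpos by (intro mult_left_mono) auto
    thus ?thesis unfolding t_def by (simp add: mult.assoc)
  qed
  also have "\<dots> \<le> exp (- (t * real (k + 1)))"
  proof -
    have "real (k+1) \<le> 2 ^ k"
    proof -
      have "k + 1 \<le> 2 ^ k" by (induction k) auto
      thus ?thesis by (metis of_nat_le_iff of_nat_numeral of_nat_power)
    qed
    thus ?thesis using t0 by (simp add: mult_left_mono)
  qed
  also have "\<dots> = exp (- t) ^ (k+1)"
  proof -
    have "exp (- (t * real (k + 1))) = exp (real (k+1) * (- t))" by (simp add: algebra_simps)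
    thus ?thesis by (simp only: exp_of_nat_mult)
  qed
  also have "\<dots> = exp (- t) * exp (- t) ^ k" by simp
  also have "\<dots> \<le> \<rho> / (4 * N * N) * (1/2) ^ k"
  proof (intro mult_mono power_mono)
    show r: "exp (- t) \<le> \<rho> / (4 * N * N)" using x2 unfolding t_def Lr_def a_def N_def by simp
    show "0 \<le> \<rho> / (4 * N * N)" using r exp_gt_zero[of "- t"] by linarith
    show "exp (- t) \<le> 1/2" using x1 unfolding t_def Lr_def a_def by simp
  qed auto
  also have "\<dots> = \<rho> / (N * N * 2 ^ (k+2))" by (simp add: power_add field_simps)
  finally show ?thesis unfolding N_def .
qed


lemma Qb:
  assumes d1: "d \<ge> 1" and L8: "real L powr (real d - \<alpha>) \<ge> 8"
    and x1: "exp (- (\<beta> * c * real L powr (- real d - \<alpha>))) \<le> 1/2"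
    and x2: "exp (- (\<beta> * c * real L powr (- real d - \<alpha>))) \<le> \<rho> / (4 * real (L^d) * real (L^d))"
    and r: "real (L^d) * real (L^d) * \<rho> \<le> 1/4"
  shows "z \<in> lattice d \<Longrightarrow> E.Pr (\<lambda>\<omega>. \<not> good k z \<omega>) \<le> \<rho> / 2^k"
proof (induction k arbitrary: z)
  have r0: "\<rho> \<ge> 0"
  proof (rule div_nonneg_pos)
    show "0 \<le> \<rho> / (4 * real (L^d) * real (L^d))" using x2 exp_gt_zero[of "- (\<beta> * c * real L powr (- real d - \<alpha>))"] by linarith
    show "4 * real (L^d) * real (L^d) > 0" using L2 by simp
  qed
  case 0
  have "E.Pr (\<lambda>\<omega>. \<not> good 0 z \<omega>) = 0" unfolding E.Pr_def by simp
  thus ?case using r0 by simp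
next
  case (Suc k)
  define N where "N = real (L^d)"
  define u where "u = \<rho> / 2^k"
  have r0: "\<rho> \<ge> 0"
  proof (rule div_nonneg_pos)
    show "0 \<le> \<rho> / (4 * real (L^d) * real (L^d))" using x2 exp_gt_zero[of "- (\<beta> * c * real L powr (- real d - \<alpha>))"] by linarith
    show "4 * real (L^d) * real (L^d) > 0" using L2 by simp
  qed
  have u0: "u \<ge> 0" unfolding u_def using r0 by simp
  have "E.Pr (\<lambda>\<omega>. \<not> good (Suc k) z \<omega>) \<le> N * N * (u * u + bk k)"
    unfolding N_def u_def using step[OF Suc.prems] Suc.IH by blast
  also have "\<dots> = (N * N * \<rho>) * (u / 2^k) + N * N * bk k" unfolding u_def by (simp add: algebra_simps)
  also have "\<dots> \<le> u / 4 + u / 4"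
  proof (rule add_mono)
    have "u / 2^k \<le> u" using u0 by (simp add: divide_le_eq_1 field_simps mult_le_cancel_left1)
    hence "(N * N * \<rho>) * (u / 2^k) \<le> (1/4) * u"
      using r u0 unfolding N_def by (intro mult_mono) auto
    thus "(N * N * \<rho>) * (u / 2^k) \<le> u / 4" by simp
    have "N * N * bk k \<le> N * N * (\<rho> / (N * N * 2 ^ (k+2)))"
      using bk_bound[OF d1 L8 x1 x2, of k] unfolding N_def by (intro mult_left_mono) auto
    also have "\<dots> = u / 4"
    proof -
      have "N > 0" unfolding N_def using L2 by simp
      thus ?thesis unfolding u_def by (simp add: power_add field_simps)
    qed
    finally show "N * N * bk k \<le> u / 4" .
  qed
  also have "\<dots> = \<rho> / 2 ^ Suc k" unfolding u_def by simp
  finally show ?case .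
qed

lemma positive:
  assumes d1: "d \<ge> 1" and L3: "L \<ge> 3" and L8: "real L powr (real d - \<alpha>) \<ge> 8"
    and x1: "exp (- (\<beta> * c * real L powr (- real d - \<alpha>))) \<le> 1/2"
    and x2: "exp (- (\<beta> * c * real L powr (- real d - \<alpha>))) \<le> \<rho> / (4 * real (L^d) * real (L^d))"
    and r: "real (L^d) * real (L^d) * \<rho> \<le> 1/4"
  shows "measure (lrp_measure d J \<beta>) (infinite_cluster_event d J \<beta>) > 0"
proof -
  let ?z = "replicate d 0"
  interpret P: prob_space E.PP by (rule E.prob_PP)
  define A where "A = (\<lambda>k. {\<omega>\<in>space E.PP. \<not> good k ?z \<omega>})"
  have Asets: "A k \<in> sets E.PP" for k
    unfolding A_def using meas_Eb[OF dep_good[OF zero_lattice, of k "\<lambda>x. \<not> fst x"]] by simp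
  have Am: "measure E.PP (A k) \<le> \<rho> / 2^k" for k
    using Qb[OF d1 L8 x1 x2 r zero_lattice, of k] unfolding A_def E.Pr_def by simp
  have N2: "real (L^d) \<ge> 2"
  proof -
    have "L ^ d \<ge> L ^ 1" using d1 L3 by (intro power_increasing) auto
    hence "2 \<le> L ^ d" using L3 by simp
    thus ?thesis by (metis of_nat_le_iff of_nat_numeral)
  qed
  have "4 * \<rho> \<le> real (L^d) * real (L^d) * \<rho>"
  proof (rule mult_right_mono)
    show "4 \<le> real (L^d) * real (L^d)" using N2 mult_mono[OF N2 N2] by simp
    show "0 \<le> \<rho>"
    proof (rule div_nonneg_pos)
      show "0 \<le> \<rho> / (4 * real (L^d) * real (L^d))" using x2 exp_gt_zero[of "- (\<beta> * c * real L powr (- real d - \<alpha>))"] by linarith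
      show "4 * real (L^d) * real (L^d) > 0" using L2 by simp
    qed
  qed
  hence r16: "\<rho> \<le> 1/16" using r by simp
  have geo: "summable (\<lambda>k. \<rho> * (1/2)^k)" by (rule summable_mult, rule summable_geometric) simp
  have eqg: "\<rho> / 2^k = \<rho> * (1/2)^k" for k :: nat by (simp add: power_one_over)
  have Am': "measure E.PP (A k) \<le> \<rho> * (1/2)^k" for k using Am[of k] unfolding eqg .
  have sA: "summable (\<lambda>k. measure E.PP (A k))"
    by (rule summable_comparison_test'[OF geo, of 0]) (use Am' in \<open>simp only: real_norm_def abs_of_nonneg measure_nonneg\<close>)
  have "measure E.PP (\<Union>k. A k) \<le> (\<Sum>k. measure E.PP (A k))"
    using Asets sA by (intro P.finite_measure_subadditive_countably) auto
  also have "\<dots> \<le> (\<Sum>k. \<rho> * (1/2)^k)" by (rule suminf_le[OF _ sA geo]) (rule Am')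
  also have "\<dots> = 2 * \<rho>" using suminf_geometric[of "1/2::real"] by (simp add: suminf_mult)
  finally have U: "measure E.PP (\<Union>k. A k) \<le> 2 * \<rho>" .
  have Us: "(\<Union>k. A k) \<in> sets E.PP" using Asets by auto
  have "measure E.PP (space E.PP - (\<Union>k. A k)) = 1 - measure E.PP (\<Union>k. A k)"
    by (rule P.prob_compl[OF Us])
  hence G: "measure E.PP (space E.PP - (\<Union>k. A k)) > 0" using U r16 by linarith
  have sub: "space E.PP - (\<Union>k. A k) \<subseteq> {\<omega>\<in>space E.PP. \<exists>x\<in>lattice d. infinite (cluster d \<omega> x)}"
  proof
    fix \<omega> assume "\<omega> \<in> space E.PP - (\<Union>k. A k)"
    hence "\<omega> \<in> space E.PP" "\<forall>k. good k ?z \<omega>" unfolding A_def by auto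
    thus "\<omega> \<in> {\<omega>\<in>space E.PP. \<exists>x\<in>lattice d. infinite (cluster d \<omega> x)}"
      using inf_from_good[OF L3 d1] zero_lattice by blast
  qed
  have "measure E.PP (space E.PP - (\<Union>k. A k)) \<le> measure E.PP {\<omega>\<in>space E.PP. \<exists>x\<in>lattice d. infinite (cluster d \<omega> x)}"
    by (rule P.finite_measure_mono[OF sub meas_inf])
  hence "measure E.PP {\<omega>\<in>space E.PP. \<exists>x\<in>lattice d. infinite (cluster d \<omega> x)} > 0" using G by linarith
  thus ?thesis unfolding infinite_cluster_event_def PP_eq .
qed

end


theorem mainTheorem7:
  fixes d :: nat and \<alpha> :: real
  assumes "d \<ge> 1" and "0 < \<alpha>" and "\<alpha> < real d"
  shows "\<exists>\<beta>\<^sub>1 :: real. \<forall>(J :: int list \<Rightarrow> int list \<Rightarrow> real) (c :: real).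
           admissible_kernel d J \<and> c > 0 \<and>
           (\<forall>x\<in>lattice d. \<forall>y\<in>lattice d. x \<noteq> y \<longrightarrow>
              J x y \<ge> c * linf_norm (vdiff x y) powr (- real d - \<alpha>))
           \<longrightarrow> ereal c * beta_c d J \<le> ereal \<beta>\<^sub>1"
proof -
  define e where "e = real d - \<alpha>"
  have e0: "e > 0" unfolding e_def using assms by simp
  define L where "L = nat \<lceil>8 powr (1/e)\<rceil> + 3"
  have L3: "L \<ge> 3" unfolding L_def by simp
  have L8: "real L powr (real d - \<alpha>) \<ge> 8"
  proof -
    have "8 powr (1/e) \<le> real L" unfolding L_def by linarith
    hence "(8 powr (1/e)) powr e \<le> real L powr e" using e0 by (intro powr_mono2) auto
    moreover have "(8 powr (1/e)) powr e = 8" using e0 by (simp add: powr_powr)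
    ultimately show ?thesis unfolding e_def by simp
  qed
  define N where "N = real (L^d)"
  have N1: "N \<ge> 1" unfolding N_def using L3 by simp
  define \<rho> where "\<rho> = 1 / (4 * N * N)"
  define t0 where "t0 = ln (16 * N * N * N * N)"
  have t0: "t0 \<ge> 0" unfolding t0_def using N1 by (simp add: mult_ge1_I)
  have Np: "16 * N * N * N * N > 0" using N1 by simp
  have et: "exp (- t0) = 1 / (16 * N * N * N * N)"
    by (simp only: t0_def exp_minus exp_ln[OF Np] inverse_eq_divide)
  define \<beta>1 where "\<beta>1 = t0 / (real L powr (- real d - \<alpha>))"
  show ?thesis
  proof (rule exI[of _ \<beta>1], intro allI impI, elim conjE)
    fix J :: "int list \<Rightarrow> int list \<Rightarrow> real" and c :: real
    assume adm: "admissible_kernel d J" and c0: "c > 0"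
      and Jl: "\<forall>x\<in>lattice d. \<forall>y\<in>lattice d. x \<noteq> y \<longrightarrow> J x y \<ge> c * linf_norm (vdiff x y) powr (- real d - \<alpha>)"
    define \<beta> where "\<beta> = \<beta>1 / c"
    have Lp: "real L powr (- real d - \<alpha>) > 0" using L3 by simp
    have b0: "\<beta> \<ge> 0" unfolding \<beta>_def \<beta>1_def using t0 c0 Lp by simp
    have bt: "\<beta> * c * real L powr (- real d - \<alpha>) = t0"
      unfolding \<beta>_def \<beta>1_def using c0 Lp by simp
    interpret lrp d L J \<beta> c \<alpha>
    proof
      show "2 \<le> L" using L3 by simp
      show "\<forall>x\<in>lattice d. \<forall>y\<in>lattice d. J x y = J y x" using adm unfolding admissible_kernel_def by blast
      show "\<forall>x\<in>lattice d. \<forall>y\<in>lattice d. x \<noteq> y \<longrightarrow> J x y \<ge> c * linf_norm (vdiff x y) powr (- real d - \<alpha>)" by (rule Jl)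
    qed (use b0 c0 assms in auto)
    have x1: "exp (- (\<beta> * c * real L powr (- real d - \<alpha>))) \<le> 1/2"
    proof -
      have "16 * N * N * N * N \<ge> 2" using N1 by (simp add: mult_ge1_I)
      thus ?thesis unfolding bt et by simp
    qed
    have x2: "exp (- (\<beta> * c * real L powr (- real d - \<alpha>))) \<le> \<rho> / (4 * real (L^d) * real (L^d))"
      unfolding bt et \<rho>_def N_def[symmetric] by (simp add: field_simps)
    have r: "real (L^d) * real (L^d) * \<rho> \<le> 1/4"
      unfolding \<rho>_def N_def[symmetric] using N1 by simp
    have pos: "measure (lrp_measure d J \<beta>) (infinite_cluster_event d J \<beta>) > 0"
      by (rule positive[OF assms(1) L3 L8 x1 x2 r])
    have "beta_c d J \<le> ereal \<beta>"
      unfolding beta_c_def using pos b0 by (intro Inf_lower) blast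
    hence "ereal c * beta_c d J \<le> ereal c * ereal \<beta>" using c0 by (intro ereal_mult_left_mono) auto
    also have "ereal c * ereal \<beta> = ereal \<beta>1" unfolding \<beta>_def using c0 by simp
    finally show "ereal c * beta_c d J \<le> ereal \<beta>1" .
  qed
qed


end
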